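(* Assume $S\neq\emptyset$, let $k\ge\max(1,k_1,\dots,k_m)$, and suppose $\mathcal{Q}_k(\tilde G)$ is closed in $\mathbb{R}[\tilde X]_{2k}$. Then the affine hyperplane $M=\{(1,x):x\in\mathbb{R}^n\}\subseteq\mathbb{R}^{n+1}$ intersects the relative interior of $\pi(\mathcal{Q}_k(\tilde G)^* )$.
   Context: $X=(X_1,\dots,X_n)$, $\tilde X=(X_0,X_1,\dots,X_n)$; $\mathbb{R}[\tilde X]_{2k}$ is the space of polynomials of degree at most $2k$. For $f\in\mathbb{R}[X]$ of degree $d$, its homogenization is $\tilde f(\tilde X)=X_0^df(X/X_0)$. Fix $g_1,\dots,g_m\in\mathbb{R}[X]$, $S=\{x\in\mathbb{R}^n:g_j(x)\ge0,\ j=1,\dots,m\}$, $k_j=\lceil\deg g_j/2\rceil$. For a finite set $H=\{h_1,\dots,h_r\}$ of polynomials, the $k$-th quadratic module is $\mathcal{Q}_k(H)=\{\sum_{j=0}^r\sigma_jh_j:h_0=1,\ \sigma_j\text{ sums of squares of polynomials},\ \deg(\sigma_jh_j)\le2k\}$. Let $\tilde G=\{\tilde g_1,\dots,\tilde g_m,X_0,\|\tilde X\|_2^2-1,1-\|\tilde X\|_2^2\}$. Identify linear functionals on $\mathbb{R}[\tilde X]_{2k}$ with sequences $y=(y_\alpha)_{\alpha\in\mathbb{N}^{n+1},|\alpha|\le2k}$ via the Riesz functional $L_y(\sum_\alpha q_\alpha\tilde X^\alpha)=\sum_\alpha q_\alpha y_\alpha$. The dual cone is $\mathcal{Q}_k(\tilde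 G)^*=\{y:L_y(p)\ge0\ \forall p\in\mathcal{Q}_k(\tilde G)\}$, and $\pi(y)=(L_y(X_0),L_y(X_1),\dots,L_y(X_n))\in\mathbb{R}^{n+1}$ is the projection onto the dual of the space of linear forms. *)

theory Defs
  imports "HOL-Analysis.Analysis" "HOL-Library.Poly_Mapping"
begin

text \<open>Real polynomials in the variables indexed by a finite type 'v
  (the variables X_0, X_1, ..., X_n, with a distinguished index x0 playing the role of X_0),
  represented as finitely supported maps from exponent vectors (monomials) to coefficients.\<close>

type_synonym 'v rpoly = "('v \<Rightarrow>\<^sub>0 nat) \<Rightarrow>\<^sub>0 real"

definition mdeg :: "('v \<Rightarrow>\<^sub>0 nat) \<Rightarrow> nat" where
  "mdeg \<alpha> = (\<Sum>i\<in>Poly_Mapping.keys \<alpha>. Poly_Mapping.lookup \<alpha> i)"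

definition pdeg :: "'v rpoly \<Rightarrow> nat" where
  "pdeg p = Max (insert 0 (mdeg ` Poly_Mapping.keys p))"

definition pvar :: "'v \<Rightarrow> 'v rpoly" where
  "pvar i = Poly_Mapping.single (Poly_Mapping.single i 1) 1"

definition peval :: "'v rpoly \<Rightarrow> ('v \<Rightarrow> real) \<Rightarrow> real" where
  "peval p x = (\<Sum>\<alpha>\<in>Poly_Mapping.keys p. Poly_Mapping.lookup p \<alpha> * (\<Prod>i\<in>Poly_Mapping.keys \<alpha>. x i ^ Poly_Mapping.lookup \<alpha> i))"

text \<open>p does not involve the variable x0 (i.e. p lies in R[X] = R[X_1,...,X_n]).\<close>
definition free_of :: "'v \<Rightarrow> 'v rpoly \<Rightarrow> bool" where
  "free_of x0 p \<longleftrightarrow> (\<forall>\<alpha>\<in>Poly_Mapping.keys p. Poly_Mapping.lookup \<alpha> x0 = 0)"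

text \<open>Homogenization with respect to x0: X_0^d f(X/X_0), d = deg f.\<close>
definition homog :: "'v \<Rightarrow> 'v rpoly \<Rightarrow> 'v rpoly" where
  "homog x0 f = (\<Sum>\<alpha>\<in>Poly_Mapping.keys f. Poly_Mapping.single (\<alpha> + Poly_Mapping.single x0 (pdeg f - mdeg \<alpha>)) (Poly_Mapping.lookup f \<alpha>))"

definition sos :: "'v rpoly \<Rightarrow> bool" where
  "sos \<sigma> \<longleftrightarrow> (\<exists>qs. \<sigma> = sum_list (map (\<lambda>q. q * q) qs))"

definition polyspace :: "nat \<Rightarrow> 'v rpoly set" where
  "polyspace d = {p. pdeg p \<le> d}"

definition quadmod :: "nat \<Rightarrow> 'v rpoly list \<Rightarrow> 'v rpoly set" where
  "quadmod k hs = {p. \<exists>\<sigma>::nat \<Rightarrow> 'v rpoly.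
      (\<forall>j\<le>length hs. sos (\<sigma> j) \<and> pdeg (\<sigma> j * ((1 # hs) ! j)) \<le> 2 * k) \<and>
      p = (\<Sum>j\<le>length hs. \<sigma> j * ((1 # hs) ! j))}"

definition Gtilde :: "'v::finite \<Rightarrow> 'v rpoly list \<Rightarrow> 'v rpoly list" where
  "Gtilde x0 gs = map (homog x0) gs @
     [pvar x0, (\<Sum>i\<in>UNIV. pvar i * pvar i) - 1, 1 - (\<Sum>i\<in>UNIV. pvar i * pvar i)]"

definition riesz :: "(('v \<Rightarrow>\<^sub>0 nat) \<Rightarrow> real) \<Rightarrow> 'v rpoly \<Rightarrow> real" where
  "riesz y p = (\<Sum>\<alpha>\<in>Poly_Mapping.keys p. Poly_Mapping.lookup p \<alpha> * y \<alpha>)"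

text \<open>Dual cone of Q inside the dual of R[X~]_{2k}: sequences y = (y_\<alpha>)_{|\<alpha>|\<le>2k}
  (represented with y_\<alpha> = 0 for |\<alpha>| > 2k).\<close>
definition dualcone :: "nat \<Rightarrow> 'v rpoly set \<Rightarrow> (('v \<Rightarrow>\<^sub>0 nat) \<Rightarrow> real) set" where
  "dualcone d Q = {y. (\<forall>\<alpha>. d < mdeg \<alpha> \<longrightarrow> y \<alpha> = 0) \<and> (\<forall>p\<in>Q. 0 \<le> riesz y p)}"

definition proj_lin :: "(('v::finite \<Rightarrow>\<^sub>0 nat) \<Rightarrow> real) \<Rightarrow> real ^ 'v" where
  "proj_lin y = (\<chi> i. riesz y (pvar i))"

end

theory Submission imports Defs begin

definition mon :: "('v::finite \<Rightarrow>\<^sub>0 nat) \<Rightarrow> ('v \<Rightarrow> real) \<Rightarrow> real" where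
  "mon \<alpha> x = (\<Prod>i\<in>UNIV. x i ^ Poly_Mapping.lookup \<alpha> i)"

lemma mon_keys: "(\<Prod>i\<in>Poly_Mapping.keys \<alpha>. x i ^ Poly_Mapping.lookup \<alpha> i) = mon \<alpha> (x::'v::finite \<Rightarrow> real)"
  unfolding mon_def
  by (rule prod.mono_neutral_left) (auto simp: in_keys_iff)

lemma mdeg_univ: "mdeg (\<alpha>::'v::finite \<Rightarrow>\<^sub>0 nat) = (\<Sum>i\<in>UNIV. Poly_Mapping.lookup \<alpha> i)"
  unfolding mdeg_def
  by (rule sum.mono_neutral_left) (auto simp: in_keys_iff)

lemma mon_add: "mon (\<alpha> + \<beta>) x = mon \<alpha> x * mon \<beta> x"
  by (simp add: mon_def lookup_add power_add prod.distrib)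

lemma peval_mon: "peval p (x::'v::finite \<Rightarrow> real) = (\<Sum>\<alpha>\<in>Poly_Mapping.keys p. Poly_Mapping.lookup p \<alpha> * mon \<alpha> x)"
  unfolding peval_def mon_keys ..

lemma peval_super: "finite A \<Longrightarrow> Poly_Mapping.keys p \<subseteq> A \<Longrightarrow>
   peval p (x::'v::finite \<Rightarrow> real) = (\<Sum>\<alpha>\<in>A. Poly_Mapping.lookup p \<alpha> * mon \<alpha> x)"
  unfolding peval_mon
  by (rule sum.mono_neutral_left) (auto simp: in_keys_iff)

lemma peval_add: "peval (p + q) (x::'v::finite \<Rightarrow> real) = peval p x + peval q x"
proof -
  let ?A = "Poly_Mapping.keys p \<union> Poly_Mapping.keys q"
  have "peval (p+q) x = (\<Sum>\<alpha>\<in>?A. Poly_Mapping.lookup (p+q) \<alpha> * mon \<alpha> x)"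
    by (rule peval_super) (use keys_add[of p q] in auto)
  also have "\<dots> = (\<Sum>\<alpha>\<in>?A. Poly_Mapping.lookup p \<alpha> * mon \<alpha> x) + (\<Sum>\<alpha>\<in>?A. Poly_Mapping.lookup q \<alpha> * mon \<alpha> x)"
    by (simp add: lookup_add distrib_right sum.distrib)
  also have "\<dots> = peval p x + peval q x"
    by (simp add: peval_super[symmetric])
  finally show ?thesis .
qed

lemma peval_diff: "peval (p - q) (x::'v::finite \<Rightarrow> real) = peval p x - peval q x"
proof -
  have "peval ((p - q) + q) x = peval (p-q) x + peval q x" by (rule peval_add)
  then show ?thesis by simp
qed

lemma peval_zero[simp]: "peval 0 x = 0"
  by (simp add: peval_def)

lemma peval_sum: "peval (\<Sum>j\<in>J. f j) (x::'v::finite \<Rightarrow> real) = (\<Sum>j\<in>J. peval (f j) x)"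
  by (induction J rule: infinite_finite_induct) (auto simp: peval_add)

lemma peval_single: "peval (Poly_Mapping.single \<beta> c) (x::'v::finite \<Rightarrow> real) = c * mon \<beta> x"
  by (simp add: peval_mon)

lemma poly_repr: "p = (\<Sum>\<alpha>\<in>Poly_Mapping.keys p. Poly_Mapping.single \<alpha> (Poly_Mapping.lookup p \<alpha>))"
proof (rule poly_mapping_eqI)
  fix \<beta>
  show "Poly_Mapping.lookup p \<beta> = Poly_Mapping.lookup (\<Sum>\<alpha>\<in>Poly_Mapping.keys p. Poly_Mapping.single \<alpha> (Poly_Mapping.lookup p \<alpha>)) \<beta>"
    by (cases "\<beta> \<in> Poly_Mapping.keys p")
       (auto simp: lookup_sum lookup_single when_def in_keys_iff sum.delta)
qed

lemma peval_mult: "peval (p * q) (x::'v::finite \<Rightarrow> real) = peval p x * peval q x"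
proof -
  have "p * q = (\<Sum>\<alpha>\<in>Poly_Mapping.keys p. Poly_Mapping.single \<alpha> (Poly_Mapping.lookup p \<alpha>)) *
       (\<Sum>\<beta>\<in>Poly_Mapping.keys q. Poly_Mapping.single \<beta> (Poly_Mapping.lookup q \<beta>))"
    by (metis poly_repr)
  also have "\<dots> = (\<Sum>\<alpha>\<in>Poly_Mapping.keys p. \<Sum>\<beta>\<in>Poly_Mapping.keys q.
        Poly_Mapping.single (\<alpha>+\<beta>) (Poly_Mapping.lookup p \<alpha> * Poly_Mapping.lookup q \<beta>))"
    by (simp add: sum_product mult_single)
  finally have "peval (p*q) x = (\<Sum>\<alpha>\<in>Poly_Mapping.keys p. \<Sum>\<beta>\<in>Poly_Mapping.keys q.
        Poly_Mapping.lookup p \<alpha> * Poly_Mapping.lookup q \<beta> * (mon \<alpha> x * mon \<beta> x))"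
    by (simp add: peval_sum peval_single mon_add)
  also have "\<dots> = peval p x * peval q x"
    by (simp add: peval_mon sum_product mult_ac)
  finally show ?thesis .
qed

lemma peval_one[simp]: "peval 1 (x::'v::finite \<Rightarrow> real) = 1"
  by (simp add: peval_mon mon_def)

lemma peval_pvar[simp]: "peval (pvar i) (x::'v::finite \<Rightarrow> real) = x i"
  proof -
  have "(\<Prod>ia\<in>UNIV. x ia ^ (if i = ia then Suc 0 else 0)) = (\<Prod>ia\<in>UNIV. if i = ia then x ia else 1)"
    by (rule prod.cong) auto
  then show ?thesis by (simp add: pvar_def peval_single mon_def lookup_single when_def)
qed

lemma sos_nonneg: "sos s \<Longrightarrow> 0 \<le> peval s (x::'v::finite \<Rightarrow> real)"
proof -
  assume "sos s"
  then obtain qs where s: "s = sum_list (map (\<lambda>q. q * q) qs)" by (auto simp: sos_def)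
  have "0 \<le> peval (sum_list (map (\<lambda>q. q * q) qs)) x"
    by (induction qs) (auto simp: peval_add peval_mult)
  then show ?thesis using s by simp
qed

lemma pdeg_le_iff: "pdeg p \<le> d \<longleftrightarrow> (\<forall>\<alpha>\<in>Poly_Mapping.keys p. mdeg \<alpha> \<le> d)"
  unfolding pdeg_def by (simp add: Max_le_iff)

lemma pdeg_add_le: "pdeg p \<le> d \<Longrightarrow> pdeg q \<le> d \<Longrightarrow> pdeg (p + q) \<le> d"
  unfolding pdeg_le_iff using keys_add[of p q] by blast

lemma pdeg_zero[simp]: "pdeg 0 = 0"
  by (simp add: pdeg_def)

lemma pdeg_sum_le: "(\<And>j. j \<in> J \<Longrightarrow> pdeg (f j) \<le> d) \<Longrightarrow> pdeg (\<Sum>j\<in>J. f j) \<le> d"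
  by (induction J rule: infinite_finite_induct) (auto intro: pdeg_add_le)

lemma riesz_peval:
  assumes "pdeg p \<le> d" "\<And>\<alpha>. mdeg \<alpha> \<le> d \<Longrightarrow> y \<alpha> = mon \<alpha> u"
  shows "riesz y p = peval p u"
  unfolding riesz_def peval_mon
  by (rule sum.cong) (use assms in \<open>auto simp: pdeg_le_iff\<close>)

lemma mon_scale:
  fixes u :: "'v::finite \<Rightarrow> real"
  assumes "\<And>i. u i = w i / N"
  shows "mon \<alpha> u = mon \<alpha> w / N ^ mdeg \<alpha>"
  by (simp add: mon_def assms power_divide prod_dividef mdeg_univ power_sum)

lemma mon_single: "mon (Poly_Mapping.single i m) u = u i ^ m"
proof -
  have "(\<Prod>ia\<in>UNIV. u ia ^ (if i = ia then m else 0)) = (\<Prod>ia\<in>UNIV. if i = ia then u ia ^ m else 1)"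
    by (rule prod.cong) auto
  then show ?thesis by (simp add: mon_def lookup_single when_def)
qed

lemma peval_homog:
  fixes x0 :: "'v::finite"
  assumes "\<And>i. u i = w i / N" "w x0 = 1" "N > 0"
  shows "peval (homog x0 g) u = (1/N) ^ pdeg g * peval g w"
proof -
  have ux: "u x0 = 1/N" using assms by simp
  have "peval (homog x0 g) u = (\<Sum>\<alpha>\<in>Poly_Mapping.keys g. Poly_Mapping.lookup g \<alpha> *
      (mon \<alpha> u * u x0 ^ (pdeg g - mdeg \<alpha>)))"
    by (simp add: homog_def peval_sum peval_single mon_add mon_single)
  also have "\<dots> = (\<Sum>\<alpha>\<in>Poly_Mapping.keys g. (1/N) ^ pdeg g * (Poly_Mapping.lookup g \<alpha> * mon \<alpha> w))"
  proof (rule sum.cong)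
    fix \<alpha> assume a: "\<alpha> \<in> Poly_Mapping.keys g"
    then have le: "mdeg \<alpha> \<le> pdeg g" using pdeg_le_iff by blast
    have "mon \<alpha> u * u x0 ^ (pdeg g - mdeg \<alpha>) = mon \<alpha> w * ((1/N) ^ mdeg \<alpha> * (1/N) ^ (pdeg g - mdeg \<alpha>))"
      using assms by (simp add: mon_scale[OF assms(1)] ux power_one_over)
    also have "\<dots> = mon \<alpha> w * (1/N) ^ pdeg g"
      using le by (simp add: power_add[symmetric])
    finally show "Poly_Mapping.lookup g \<alpha> * (mon \<alpha> u * u x0 ^ (pdeg g - mdeg \<alpha>)) =
        (1/N) ^ pdeg g * (Poly_Mapping.lookup g \<alpha> * mon \<alpha> w)" by simp
  qed simp
  also have "\<dots> = (1/N) ^ pdeg g * peval g w"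
    by (simp add: peval_mon sum_distrib_left)
  finally show ?thesis .
qed

lemma peval_free:
  fixes x0 :: "'v::finite"
  assumes "free_of x0 g"
  shows "peval g (x(x0 := c)) = peval g x"
  unfolding peval_mon
proof (rule sum.cong)
  fix \<alpha> assume "\<alpha> \<in> Poly_Mapping.keys g"
  then have z: "Poly_Mapping.lookup \<alpha> x0 = 0" using assms by (auto simp: free_of_def)
  have "mon \<alpha> (x(x0 := c)) = mon \<alpha> x"
    unfolding mon_def by (rule prod.cong) (auto simp: z)
  then show "Poly_Mapping.lookup g \<alpha> * mon \<alpha> (x(x0 := c)) = Poly_Mapping.lookup g \<alpha> * mon \<alpha> x" by simp
qed simp

lemma riesz_comb: "riesz (\<lambda>\<alpha>. a * y1 \<alpha> + b * y2 \<alpha>) p = a * riesz y1 p + b * riesz y2 p"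
  by (simp add: riesz_def sum.distrib sum_distrib_left algebra_simps)

lemma dual_comb:
  assumes "y1 \<in> dualcone d Q" "y2 \<in> dualcone d Q" "0 \<le> a" "0 \<le> b"
  shows "(\<lambda>\<alpha>. a * y1 \<alpha> + b * y2 \<alpha>) \<in> dualcone d Q"
  using assms by (auto simp: dualcone_def riesz_comb)

lemma proj_comb: "proj_lin (\<lambda>\<alpha>. a * y1 \<alpha> + b * y2 \<alpha>) = a *\<^sub>R proj_lin y1 + b *\<^sub>R proj_lin y2"
  unfolding proj_lin_def vec_eq_iff by (simp add: riesz_comb)

lemma C_convex: "convex (proj_lin ` dualcone d Q)"
proof (rule convexI)
  fix z1 z2 and a b :: real
  assume h: "z1 \<in> proj_lin ` dualcone d Q" "z2 \<in> proj_lin ` dualcone d Q" "0 \<le> a" "0 \<le> b" "a + b = 1"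
  obtain y1 where y1: "y1 \<in> dualcone d Q" "z1 = proj_lin y1" using h(1) by (rule imageE) simp
  obtain y2 where y2: "y2 \<in> dualcone d Q" "z2 = proj_lin y2" using h(2) by (rule imageE) simp
  have m: "(\<lambda>\<alpha>. a * y1 \<alpha> + b * y2 \<alpha>) \<in> dualcone d Q" by (rule dual_comb[OF y1(1) y2(1) h(3) h(4)])
  have e: "a *\<^sub>R z1 + b *\<^sub>R z2 = proj_lin (\<lambda>\<alpha>. a * y1 \<alpha> + b * y2 \<alpha>)"
    unfolding y1(2) y2(2) by (rule proj_comb[symmetric])
  show "a *\<^sub>R z1 + b *\<^sub>R z2 \<in> proj_lin ` dualcone d Q" unfolding e by (rule imageI) (rule m)
qed

lemma C_sub:
  assumes t: "t \<ge> 0" and z: "z \<in> proj_lin ` dualcone d Q"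
  shows "t *\<^sub>R z \<in> proj_lin ` dualcone d Q"
proof -
  obtain y where y: "y \<in> dualcone d Q" "z = proj_lin y" using z by (rule imageE) simp
  have m: "(\<lambda>\<alpha>. t * y \<alpha> + 0 * y \<alpha>) \<in> dualcone d Q" by (rule dual_comb[OF y(1) y(1) t order_refl])
  have e: "t *\<^sub>R z = proj_lin (\<lambda>\<alpha>. t * y \<alpha> + 0 * y \<alpha>)"
    unfolding y(2) proj_comb by simp
  show ?thesis unfolding e by (rule imageI) (rule m)
qed

lemma C_scale: "c > 0 \<Longrightarrow> (*\<^sub>R) c ` (proj_lin ` dualcone d Q) = proj_lin ` dualcone d Q"
proof -
  assume c: "c > 0"
  show ?thesis
  proof (rule set_eqI, rule iffI)
    fix z assume "z \<in> (*\<^sub>R) c ` (proj_lin ` dualcone d Q)"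
    then obtain z' where z': "z' \<in> proj_lin ` dualcone d Q" "z = c *\<^sub>R z'" by (rule imageE) simp
    show "z \<in> proj_lin ` dualcone d Q" unfolding z'(2) using c by (intro C_sub z') simp
  next
    fix z assume z: "z \<in> proj_lin ` dualcone d Q"
    have m: "(1/c) *\<^sub>R z \<in> proj_lin ` dualcone d Q" using c by (intro C_sub z) simp
    have e: "z = c *\<^sub>R ((1/c) *\<^sub>R z)" using c by simp
    show "z \<in> (*\<^sub>R) c ` (proj_lin ` dualcone d Q)" by (subst e) (rule imageI[OF m])
  qed
qed

lemma mdeg_single: "mdeg (Poly_Mapping.single i (1::nat)) = 1"
  by (simp add: mdeg_def)

lemma mdeg_single': "mdeg (Poly_Mapping.single i (Suc 0)) = 1"
  using mdeg_single by simp

lemma pdeg_pvar: "pdeg (pvar i) = 1"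
  by (simp add: pdeg_def pvar_def mdeg_single mdeg_single')

theorem mainTheorem12:
  fixes x0 :: "'v::finite"
    and gs :: "'v rpoly list"
    and k :: nat
  assumes gs_in_X: "\<forall>g\<in>set gs. free_of x0 g"
    and S_nonempty: "\<exists>x::'v \<Rightarrow> real. \<forall>g\<in>set gs. 0 \<le> peval g x"
    and k_ge1: "1 \<le> k"
    and k_ge: "\<forall>g\<in>set gs. nat \<lceil>real (pdeg g) / 2\<rceil> \<le> k"
    and closed: "closedin (top_of_set (Poly_Mapping.lookup ` polyspace (2 * k)))
                   (Poly_Mapping.lookup ` quadmod k (Gtilde x0 gs))"
  shows "{z::real ^ 'v. z $ x0 = 1}
           \<inter> rel_interior (proj_lin ` dualcone (2 * k) (quadmod k (Gtilde x0 gs))) \<noteq> {}"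
proof -
  obtain x :: "'v \<Rightarrow> real" where hx: "\<forall>g\<in>set gs. 0 \<le> peval g x" using S_nonempty by blast
  define w where "w = x(x0 := 1)"
  define N where "N = sqrt (\<Sum>i\<in>UNIV. w i ^ 2)"
  define u where "u i = w i / N" for i
  have w0: "w x0 = 1" by (simp add: w_def)
  have "1 \<le> (\<Sum>i\<in>UNIV. w i ^ 2)"
    using member_le_sum[of x0 UNIV "\<lambda>i. w i ^ 2"] w0 by simp
  then have Npos: "N > 0" and N2: "N ^ 2 = (\<Sum>i\<in>UNIV. w i ^ 2)" by (auto simp: N_def)
  have Sne: "(\<Sum>i\<in>UNIV. w i ^ 2) \<noteq> 0" using N2 Npos by (metis power_not_zero less_irrefl)
  have usq: "(\<Sum>i\<in>UNIV. u i * u i) = 1"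
    using Npos N2 Sne by (simp add: u_def power2_eq_square[symmetric] power_divide sum_divide_distrib[symmetric])
  have u0: "u x0 = 1 / N" by (simp add: u_def w0)
  define Q where "Q = quadmod k (Gtilde x0 gs)"
  define y0 where "y0 \<alpha> = (if mdeg \<alpha> \<le> 2 * k then mon \<alpha> u else 0)" for \<alpha>
  have y0m: "\<And>\<alpha>. mdeg \<alpha> \<le> 2 * k \<Longrightarrow> y0 \<alpha> = mon \<alpha> u" by (simp add: y0_def)
  have hnn: "0 \<le> peval h u" if "h \<in> set (1 # Gtilde x0 gs)" for h
  proof -
    have "h = 1 \<or> (\<exists>g\<in>set gs. h = homog x0 g) \<or> h = pvar x0 \<or>
          h = (\<Sum>i\<in>UNIV. pvar i * pvar i) - 1 \<or> h = 1 - (\<Sum>i\<in>UNIV. pvar i * pvar i)"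
      using that by (auto simp: Gtilde_def)
    moreover have sq: "peval (\<Sum>i\<in>UNIV. pvar i * pvar i) u = 1"
      by (simp add: peval_sum peval_mult usq)
    moreover have "0 \<le> peval (homog x0 g) u" if "g \<in> set gs" for g
    proof -
      have "peval (homog x0 g) u = (1/N) ^ pdeg g * peval g w"
        by (rule peval_homog) (auto simp: u_def w0 Npos)
      also have "peval g w = peval g x" unfolding w_def using gs_in_X that by (simp add: peval_free)
      finally show ?thesis using hx that Npos by simp
    qed
    moreover have "peval (pvar x0) u \<ge> 0" using u0 Npos by simp
    moreover have "peval ((\<Sum>i\<in>UNIV. pvar i * pvar i) - 1) u = 0" by (simp add: peval_diff sq)
    moreover have "peval (1 - (\<Sum>i\<in>UNIV. pvar i * pvar i)) u = 0" by (simp add: peval_diff sq)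
    ultimately show ?thesis by (elim disjE bexE) simp_all
  qed
  have y0D: "y0 \<in> dualcone (2 * k) Q"
    unfolding dualcone_def
  proof (intro CollectI conjI allI impI ballI)
    fix \<alpha> :: "'v \<Rightarrow>\<^sub>0 nat" assume "2 * k < mdeg \<alpha>" then show "y0 \<alpha> = 0" by (simp add: y0_def)
  next
    fix p assume "p \<in> Q"
    then obtain \<sigma> where s: "\<forall>j\<le>length (Gtilde x0 gs). sos (\<sigma> j) \<and>
        pdeg (\<sigma> j * ((1 # Gtilde x0 gs) ! j)) \<le> 2 * k"
      and p: "p = (\<Sum>j\<le>length (Gtilde x0 gs). \<sigma> j * ((1 # Gtilde x0 gs) ! j))"
      by (auto simp: Q_def quadmod_def)
    have "pdeg p \<le> 2 * k" unfolding p by (rule pdeg_sum_le) (use s in auto)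
    then have "riesz y0 p = peval p u" by (rule riesz_peval) (rule y0m)
    also have "\<dots> = (\<Sum>j\<le>length (Gtilde x0 gs). peval (\<sigma> j) u * peval ((1 # Gtilde x0 gs) ! j) u)"
      by (simp add: p peval_sum peval_mult)
    also have "\<dots> \<ge> 0"
    proof (rule sum_nonneg)
      fix j assume j: "j \<in> {..length (Gtilde x0 gs)}"
      have m: "(1 # Gtilde x0 gs) ! j \<in> set (1 # Gtilde x0 gs)" using j by (intro nth_mem) auto
      show "0 \<le> peval (\<sigma> j) u * peval ((1 # Gtilde x0 gs) ! j) u"
      proof -
        have "0 \<le> peval ((1 # Gtilde x0 gs) ! j) u" by (rule hnn[OF m])
        moreover have "0 \<le> peval (\<sigma> j) u" using s j sos_nonneg by auto
        ultimately show ?thesis by simp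
      qed
    qed
    finally show "0 \<le> riesz y0 p" .
  qed
  define C where "C = proj_lin ` dualcone (2 * k) Q"
  have p0C: "proj_lin y0 \<in> C" using y0D by (simp add: C_def)
  have "riesz y0 (pvar x0) = peval (pvar x0) u"
    by (rule riesz_peval[of _ "2*k"]) (use k_ge1 pdeg_pvar[of x0] in simp, rule y0m)
  then have p00: "proj_lin y0 $ x0 = 1 / N" by (simp add: proj_lin_def u0)
  have cvx: "convex C" unfolding C_def by (rule C_convex)
  then obtain a where a: "a \<in> rel_interior C" using p0C rel_interior_eq_empty by blast
  define q where "q = 1 / N"
  have qpos: "q > 0" using Npos by (simp add: q_def)
  define e where "e = q / (2 * (q + \<bar>a $ x0\<bar>))"
  have den: "0 < q + \<bar>a $ x0\<bar>" using qpos by simp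
  have e1: "0 < e" unfolding e_def using den qpos by simp
  have e2: "e \<le> 1" unfolding e_def using den qpos by (simp add: divide_le_eq)
  have e3: "e * (q + \<bar>a $ x0\<bar>) = q / 2" unfolding e_def using den by (simp add: field_simps)
  note e = e1 e2 e3
  define z where "z = proj_lin y0 - e *\<^sub>R (proj_lin y0 - a)"
  have zC: "z \<in> rel_interior C" unfolding z_def
    by (rule rel_interior_closure_convex_shrink[OF cvx a]) (use p0C closure_subset e in auto)
  have "z $ x0 = q - e * (q - a $ x0)" by (simp add: z_def p00 q_def)
  moreover have "e * (q - a $ x0) \<le> e * (q + \<bar>a $ x0\<bar>)" using e(1) by (intro mult_left_mono) auto
  ultimately have zpos: "z $ x0 > 0" using e(3) qpos by linarith
  define t where "t = 1 / z $ x0"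
  have tpos: "t > 0" using zpos by (simp add: t_def)
  have "t *\<^sub>R z \<in> (*\<^sub>R) t ` rel_interior C" using zC by blast
  also have "\<dots> = rel_interior ((*\<^sub>R) t ` C)" using tpos by (simp add: rel_interior_scaleR)
  also have "(*\<^sub>R) t ` C = C" unfolding C_def using C_scale[OF tpos] by simp
  finally have "t *\<^sub>R z \<in> rel_interior C" .
  moreover have "(t *\<^sub>R z) $ x0 = 1" using zpos by (simp add: t_def)
  ultimately have "{z::real^'v. z $ x0 = 1} \<inter> rel_interior C \<noteq> {}" by blast
  then show ?thesis unfolding C_def Q_def .
qed

end
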